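(* The factor complexities $\mathsf{p}_{\mathbf{t}_{3/2}}$ and $\mathsf{p}_{\Delta(\mathbf{t}_{3/2})}$ are both in $\Theta(n^r)$ with $r=\frac{\log 3}{\log(3/2)}$; that is, for each of these two functions $\mathsf{p}$ there exist constants $C_1,C_2>0$ with $C_1n^r\le\mathsf{p}(n)\le C_2n^r$ for all $n\ge1$.
   Context: The Thue--Morse word in base $3/2$ is the unique binary sequence $\mathbf{t}_{3/2}=(t_n)_{n\ge0}$ with $t_0=0$, $t_{3n}=t_{3n+1}=t_{2n}$ and $t_{3n+2}=1-t_{2n+1}$ for all $n\ge0$ (equivalently, $t_n$ is the digit sum modulo $2$ of the base-$3/2$ expansion of $n$, where $\langle 0\rangle$ is empty and $\langle n\rangle=\langle m\rangle d$ for $2n=3m+d$, $d\in\{0,1,2\}$). For a binary sequence $\mathbf{x}=(x_n)$, $\Delta(\mathbf{x})=(x_{n+1}-x_n\bmod 2)_{n\ge0}$, and $\mathsf{p}_{\mathbf{x}}(n)$ is the number of distinct length-$n$ factors of $\mathbf{x}$. *)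

theory Defs
  imports Complex_Main
begin

function base32 :: "nat \<Rightarrow> nat list" where
  "base32 n = (if n = 0 then [] else base32 (2 * n div 3) @ [2 * n mod 3])"
  by pat_completeness auto
termination
  by (relation "measure id") auto

definition tm32 :: "nat \<Rightarrow> nat" where
  "tm32 n = sum_list (base32 n) mod 2"

text \<open>Difference sequence of a binary sequence (values in {0,1}):
  (x(n+1) - x(n)) mod 2, computed as (x(n+1) + x(n)) mod 2.\<close>
definition Delta :: "(nat \<Rightarrow> nat) \<Rightarrow> nat \<Rightarrow> nat" where
  "Delta x n = (x (Suc n) + x n) mod 2"

definition factors :: "(nat \<Rightarrow> 'a) \<Rightarrow> nat \<Rightarrow> 'a list set" where
  "factors x n = {map (\<lambda>j. x (i + j)) [0..<n] | i. True}"

definition fcomplexity :: "(nat \<Rightarrow> 'a) \<Rightarrow> nat \<Rightarrow> nat" where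
  "fcomplexity x n = card (factors x n)"

end

theory Submission
  imports Defs
begin

declare base32.simps[simp del]

lemma tm_rec: "tm32 n = (tm32 (2*n div 3) + 2*n mod 3) mod 2"
proof (cases "n = 0")
  case True then show ?thesis by (simp add: tm32_def)
next
  case False
  then have "base32 n = base32 (2 * n div 3) @ [2 * n mod 3]" by (subst base32.simps) simp
  then show ?thesis by (simp add: tm32_def mod_add_left_eq)
qed

abbreviation D where "D \<equiv> Delta tm32"

lemma D_lt: "D n < 2" by (simp add: Delta_def)

lemma tm_lt: "tm32 n < 2" by (simp add: tm32_def)

lemma tm_3k: "tm32 (3*k) = tm32 (2*k)"
proof -
  have "2*(3*k) div 3 = 2*k" "2*(3*k) mod 3 = 0" by simp_all
  then show ?thesis using tm_rec[of "3*k"] tm_lt[of "2*k"] by simp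
qed

lemma tm_3k1: "tm32 (3*k+1) = tm32 (2*k)"
proof -
  have "2*(3*k+1) div 3 = 2*k" "2*(3*k+1) mod 3 = 2" by presburger+
  then show ?thesis using tm_rec[of "3*k+1"] tm_lt[of "2*k"] by simp
qed

lemma tm_3k2: "tm32 (3*k+2) = (tm32 (2*k+1) + 1) mod 2"
proof -
  have "2*(3*k+2) div 3 = 2*k+1" "2*(3*k+2) mod 3 = 1" by presburger+
  then show ?thesis using tm_rec[of "3*k+2"] by simp
qed

lemma D_3k: "D (3*k) = 0"
  using tm_3k[of k] tm_3k1[of k] by (simp add: Delta_def)

lemma m2a: "((b::nat) + (a+1) mod 2) mod 2 = (1 + (b+a) mod 2) mod 2" by presburger
lemma m2b: "(x::nat) < 2 \<Longrightarrow> (1 + (1 + x) mod 2) mod 2 = x" by presburger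

lemma D_eq: "D n = (tm32 (n+1) + tm32 n) mod 2" by (simp add: Delta_def)

lemma D_3k1: "D (3*k+1) = (1 + D (2*k)) mod 2"
proof -
  have "D (3*k+1) = (tm32 (3*k+1+1) + tm32 (3*k+1)) mod 2" by (rule D_eq)
  also have "3*k+1+1 = 3*k+2" by simp
  also have "(tm32 (3*k+2) + tm32 (3*k+1)) mod 2 = ((tm32 (2*k+1) + 1) mod 2 + tm32 (2*k)) mod 2"
    using tm_3k1[of k] tm_3k2[of k] by simp
  also have "... = (1 + (tm32 (2*k+1) + tm32 (2*k)) mod 2) mod 2" by presburger
  also have "(tm32 (2*k+1) + tm32 (2*k)) mod 2 = D (2*k)" using D_eq[of "2*k"] by simp
  finally show ?thesis .
qed

lemma D_3k2: "D (3*k+2) = (1 + D (2*k+1)) mod 2"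
proof -
  have e1: "tm32 (3*k+3) = tm32 (2*k+2)" using tm_3k[of "k+1"] by (simp add: algebra_simps)
  have "D (3*k+2) = (tm32 (3*k+2+1) + tm32 (3*k+2)) mod 2" by (rule D_eq)
  also have "3*k+2+1 = 3*k+3" by simp
  also have "(tm32 (3*k+3) + tm32 (3*k+2)) mod 2 = (tm32 (2*k+2) + (tm32 (2*k+1) + 1) mod 2) mod 2"
    using e1 tm_3k2[of k] by simp
  also have "... = (1 + (tm32 (2*k+2) + tm32 (2*k+1)) mod 2) mod 2" by (rule m2a)
  also have "(tm32 (2*k+2) + tm32 (2*k+1)) mod 2 = D (2*k+1)" using D_eq[of "2*k+1"] by simp
  finally show ?thesis .
qed

lemma D_up: "D y = (1 + D ((3*y+2) div 2)) mod 2"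
proof (cases "even y")
  case True
  then obtain q where y: "y = 2*q" by blast
  have "(3*y+2) div 2 = 3*q+1" using y by simp
  then have "(1 + D ((3*y+2) div 2)) mod 2 = (1 + (1 + D y) mod 2) mod 2" using D_3k1[of q] y by simp
  then show ?thesis using m2b[OF D_lt[of y]] by simp
next
  case False
  then obtain q where y: "y = 2*q+1" using oddE by blast
  have "(3*y+2) div 2 = 3*q+2" using y by presburger
  then have "(1 + D ((3*y+2) div 2)) mod 2 = (1 + (1 + D y) mod 2) mod 2" using D_3k2[of q] y by simp
  then show ?thesis using m2b[OF D_lt[of y]] by simp
qed

lemma D_9q1: "D (9*q+1) = 1"
proof -
  have "D (9*q+1) = D (3*(3*q)+1)" by simp
  also have "... = (1 + D (2*(3*q))) mod 2" by (rule D_3k1)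
  also have "D (2*(3*q)) = D (3*(2*q))" by (simp add: mult.left_commute)
  also have "... = 0" by (rule D_3k)
  finally show ?thesis by simp
qed

lemma D_9q5: "D (9*q+5) = 1"
proof -
  have e: "9*q+5 = 3*(3*q+1)+2" by simp
  have "D (9*q+5) = D (3*(3*q+1)+2)" by (simp only: e)
  also have "... = (1 + D (2*(3*q+1)+1)) mod 2" by (rule D_3k2)
  also have "2*(3*q+1)+1 = 3*(2*q+1)" by simp
  also have "D (3*(2*q+1)) = 0" by (rule D_3k)
  finally show ?thesis by simp
qed

definition agreeD where "agreeD i i' n \<longleftrightarrow> (\<forall>u<n. D (i+u) = D (i'+u))"

lemma fin9: "(b::nat) < 9 \<Longrightarrow> b = 0 \<or> b = 1 \<or> b = 2 \<or> b = 3 \<or> b = 4 \<or> b = 5 \<or> b = 6 \<or> b = 7 \<or> b = 8" by linarith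
lemma fin3: "(b::nat) < 3 \<Longrightarrow> b = 0 \<or> b = 1 \<or> b = 2" by linarith
lemma wit: "b < 9 \<Longrightarrow> c < (3::nat) \<Longrightarrow> b mod 3 \<noteq> c \<Longrightarrow>
   (let \<delta> = (if (b + 3 - c) mod 3 = 1 then (10 - b) mod 9 else (14 - b) mod 9) in
    \<delta> < 9 \<and> ((b+\<delta>) mod 9 = 1 \<or> (b+\<delta>) mod 9 = 5) \<and> (c+\<delta>) mod 3 = 0)"
proof -
  assume a: "b < 9" "c < (3::nat)" "b mod 3 \<noteq> c"
  from fin9[OF a(1)] fin3[OF a(2)] a(3) show ?thesis by (elim disjE) (simp_all add: Let_def)
qed

lemma R1:
  assumes "agreeD i i' n" "n \<ge> 9"
  shows "i mod 3 = i' mod 3"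
proof (rule ccontr)
  assume ne: "i mod 3 \<noteq> i' mod 3"
  define b where "b = i mod 9"
  define c where "c = i' mod 3"
  have b: "b < 9" and c: "c < 3" by (simp_all add: b_def c_def)
  have bc: "b mod 3 \<noteq> c" using ne by (simp add: b_def c_def mod_mod_cancel)
  have i: "i = 9*(i div 9) + b" and i': "i' = 3*(i' div 3) + c" by (simp_all add: b_def c_def)
  obtain \<delta> where d: "\<delta><9" "((b+\<delta>) mod 9 = 1 \<or> (b+\<delta>) mod 9 = 5)" "(c+\<delta>) mod 3 = 0"
    using wit[OF b c bc] by (auto simp: Let_def)
  have m1: "(i+\<delta>) mod 9 = (b+\<delta>) mod 9" by (subst i) (simp add: add.assoc)
  have m2: "(i'+\<delta>) mod 3 = (c+\<delta>) mod 3" by (subst i') (simp add: add.assoc)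
  have "D (i+\<delta>) = 1"
  proof -
    have "i+\<delta> = 9*((i+\<delta>) div 9) + (i+\<delta>) mod 9" by simp
    then show ?thesis using d(2) m1 D_9q1 D_9q5 by metis
  qed
  moreover have "D (i'+\<delta>) = 0"
  proof -
    have "i'+\<delta> = 3*((i'+\<delta>) div 3) + (i'+\<delta>) mod 3" by simp
    then have "i'+\<delta> = 3*((i'+\<delta>) div 3)" using d(3) m2 by simp
    then show ?thesis using D_3k by metis
  qed
  moreover have "D (i+\<delta>) = D (i'+\<delta>)" using assms d(1) unfolding agreeD_def by auto
  ultimately show False by simp
qed

definition L :: "nat \<Rightarrow> nat" where "L i = 2*(i div 3) + (if i mod 3 = 2 then 1 else 0)"

lemma div2_shift: "(3*(2*k+w)+2) div 2 = 3*k + (3*w+2) div (2::nat)"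
proof -
  have "3*(2*k+w)+2 = (3*w+2) + 2*(3*k)" by simp
  then show ?thesis by simp
qed

lemma descent:
  assumes "agreeD i i' n" "i mod 3 = i' mod 3" "3*m+3 \<le> 2*n"
  shows "agreeD (L i) (L i') m"
  unfolding agreeD_def
proof (intro allI impI)
  fix u assume u: "u < m"
  define k where "k = i div 3"
  define k' where "k' = i' div 3"
  define s where "s = i mod 3"
  define e :: nat where "e = (if s = 2 then 1 else 0)"
  have i: "i = 3*k+s" and s: "s < 3" by (simp_all add: k_def s_def)
  have i': "i' = 3*k'+s" by (simp add: k'_def s_def assms(2))
  have Li: "L i = 2*k + e" and Li': "L i' = 2*k' + e"
    using i i' s unfolding L_def e_def by simp_all
  define \<delta> where "\<delta> = (3*(e+u)+2) div 2 - s"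
  have ge: "(3*(e+u)+2) div 2 \<ge> s"
    using fin3[OF s] unfolding e_def by auto
  have e1: "(3*(L i+u)+2) div 2 = i + \<delta>"
  proof -
    have "(3*(L i+u)+2) div 2 = (3*(2*k+(e+u))+2) div 2" by (simp only: Li add.assoc)
    also have "... = 3*k + (3*(e+u)+2) div 2" by (rule div2_shift)
    finally show ?thesis using i ge unfolding \<delta>_def by simp
  qed
  have e2: "(3*(L i'+u)+2) div 2 = i' + \<delta>"
  proof -
    have "(3*(L i'+u)+2) div 2 = (3*(2*k'+(e+u))+2) div 2" by (simp only: Li' add.assoc)
    also have "... = 3*k' + (3*(e+u)+2) div 2" by (rule div2_shift)
    finally show ?thesis using i' ge unfolding \<delta>_def by simp
  qed
  have "e \<le> 1" unfolding e_def by simp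
  have "(3*(e+u)+2) div 2 < n"
  proof -
    define x where "x = (3*(e+u)+2) div 2"
    have "2 * x \<le> 3*(e+u)+2" unfolding x_def by simp
    moreover have "u + 1 \<le> m" using u by simp
    ultimately have "x < n" using assms(3) \<open>e \<le> 1\<close> by (simp add: algebra_simps)
    then show ?thesis unfolding x_def .
  qed
  then have "\<delta> < n" unfolding \<delta>_def by linarith
  then have "D (i+\<delta>) = D (i'+\<delta>)" using assms(1) unfolding agreeD_def by auto
  then show "D (L i + u) = D (L i' + u)"
    using D_up[of "L i + u"] D_up[of "L i' + u"] e1 e2 by simp
qed



lemma modeq_int: "((a::nat) mod M = b mod M) \<longleftrightarrow> (int M dvd int a - int b)"
  by (metis of_nat_eq_iff of_nat_mod mod_eq_dvd_iff)

lemma mod_lift: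
  assumes "i mod 3 = i' mod 3" "L i mod 3^j = L i' mod 3^j"
  shows "i mod 3^(Suc j) = i' mod 3^(Suc j)"
proof -
  define k where "k = i div 3"
  define k' where "k' = i' div 3"
  define s where "s = i mod 3"
  have i: "i = 3*k+s" by (simp add: k_def s_def)
  have i': "i' = 3*k'+s" by (simp add: k'_def s_def assms(1))
  have "int (L i) - int (L i') = 2*(int k - int k')"
    unfolding L_def k_def k'_def using assms(1) by simp
  then have "int (3^j) dvd 2*(int k - int k')" using assms(2) modeq_int by metis
  moreover have "coprime (int (3^j)) 2"
    by (simp add: coprime_power_left_iff)
  ultimately have "int (3^j) dvd (int k - int k')"
    using coprime_dvd_mult_right_iff by blast
  then have "3 * int (3^j) dvd 3 * (int k - int k')" by (rule mult_dvd_mono[OF dvd_refl])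
  moreover have "int i - int i' = 3 * (int k - int k')" using i i' by simp
  ultimately have "int (3^(Suc j)) dvd int i - int i'" by simp
  then show ?thesis using modeq_int by metis
qed

lemma pow23: "(2::nat)^j \<le> 3^j" by (simp add: power_mono)

lemma RD: "\<forall>i i' n. agreeD i i' n \<longrightarrow> 10*3^j \<le> 2^j*(n+5) \<longrightarrow> i mod 3^j = i' mod 3^j"
proof (induction j)
  case 0 then show ?case by simp
next
  case (Suc j)
  show ?case
  proof (intro allI impI)
    fix i i' n assume ag: "agreeD i i' n" and h: "10*3^(Suc j) \<le> 2^(Suc j)*(n+5)"
    have p: "2^j \<le> (3::nat)^j" by (rule pow23)
    have "2^j*30 \<le> (2::nat)^j*(2*(n+5))"
    proof -
      have "2^j*30 \<le> (3::nat)^j*30" using p by simp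
      also have "... = 10*3^(Suc j)" by simp
      also have "... \<le> 2^(Suc j)*(n+5)" by (rule h)
      also have "... = 2^j*(2*(n+5))" by simp
      finally show ?thesis .
    qed
    then have "30 \<le> 2*(n+5)" by simp
    then have n10: "n \<ge> 10" by simp
    have i3: "i mod 3 = i' mod 3" by (rule R1[OF ag]) (use n10 in simp)
    define m where "m = (2*n-3) div 3"
    have "3*m \<le> 2*n-3" unfolding m_def by simp
    then have m1: "3*m+3 \<le> 2*n" using n10 by simp
    define r where "r = (2*n-3) mod 3"
    have "2*n-3 = 3*m + r" unfolding m_def r_def by simp
    moreover have "r < 3" unfolding r_def by simp
    moreover have "2*n - 3 + 3 = 2*n" using n10 by simp
    ultimately have "2*n \<le> 3*m+5" by linarith
    then have m2: "2*n+10 \<le> 3*(m+5)" by (simp add: algebra_simps)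
    have "3*(10*3^j) \<le> 3*(2^j*(m+5))"
    proof -
      have "3*(10*3^j) = 10*(3::nat)^(Suc j)" by simp
      also have "... \<le> 2^(Suc j)*(n+5)" by (rule h)
      also have "... = 2^j*(2*n+10)" by simp
      also have "... \<le> 2^j*(3*(m+5))" using m2 by simp
      also have "... = 3*(2^j*(m+5))" by simp
      finally show ?thesis .
    qed
    then have "10*3^j \<le> 2^j*(m+5)" by simp
    moreover have "agreeD (L i) (L i') m" by (rule descent[OF ag i3 m1])
    ultimately have "L i mod 3^j = L i' mod 3^j" using Suc.IH by blast
    then show "i mod 3^(Suc j) = i' mod 3^(Suc j)" by (rule mod_lift[OF i3])
  qed
qed

definition win :: "(nat \<Rightarrow> nat) \<Rightarrow> nat \<Rightarrow> nat \<Rightarrow> nat list" where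
  "win X i n = map (\<lambda>j. X (i+j)) [0..<n]"

lemma factors_win: "factors X n = range (\<lambda>i. win X i n)"
  unfolding factors_def win_def by auto

lemma factors_sub:
  assumes "\<And>k. (X::nat\<Rightarrow>nat) k < 2"
  shows "factors X n \<subseteq> {xs. set xs \<subseteq> {..<2} \<and> length xs = n}"
  unfolding factors_win win_def using assms by auto

lemma factors_finite: "(\<And>k. (X::nat\<Rightarrow>nat) k < 2) \<Longrightarrow> finite (factors X n)"
  by (rule finite_subset[OF factors_sub]) (auto intro: finite_lists_length_eq)

lemma factors_card2: "(\<And>k. (X::nat\<Rightarrow>nat) k < 2) \<Longrightarrow> fcomplexity X n \<le> 2^n"
proof -
  assume a: "\<And>k. (X::nat\<Rightarrow>nat) k < 2"
  have "card (factors X n) \<le> card {xs. set xs \<subseteq> {..<2::nat} \<and> length xs = n}"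
    by (rule card_mono[OF _ factors_sub[OF a]]) (auto intro: finite_lists_length_eq)
  also have "... = 2^n" by (simp add: card_lists_length_eq)
  finally show ?thesis unfolding fcomplexity_def .
qed

lemma win_eq: "win X i n = win X i' n \<longleftrightarrow> (\<forall>u<n. X (i+u) = X (i'+u))"
  unfolding win_def by (auto simp: map_eq_conv)

lemma count_lower:
  assumes X: "\<And>k. (X::nat\<Rightarrow>nat) k < 2"
    and agr: "\<And>i i'. win X i n = win X i' n \<Longrightarrow> agreeD i i' (n-1)"
    and h: "10*3^j \<le> 2^j*(n+4)"
  shows "3^j \<le> fcomplexity X n"
proof -
  have n1: "n \<ge> 1"
  proof (rule ccontr)
    assume "\<not> n \<ge> 1"
    then have "n = 0" by simp
    then have "10*3^j \<le> (2::nat)^j*4" using h by simp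
    moreover have "(2::nat)^j*4 < 10*3^j" using pow23[of j] zero_less_power[of "3::nat" j] by linarith
    ultimately show False by simp
  qed
  have eq: "(n-1)+5 = n+4" using n1 by simp
  have h5: "10*3^j \<le> 2^j*((n-1)+5)" unfolding eq by (rule h)
  have inj: "inj_on (\<lambda>i. win X i n) {..<(3::nat)^j}"
  proof (rule inj_onI)
    fix i i' assume "i \<in> {..<(3::nat)^j}" "i' \<in> {..<(3::nat)^j}" "win X i n = win X i' n"
    then have "i mod 3^j = i' mod 3^j" using RD[of j] agr h5 by blast
    then show "i = i'" using \<open>i \<in> {..<(3::nat)^j}\<close> \<open>i' \<in> {..<(3::nat)^j}\<close> by simp
  qed
  have "card {..<(3::nat)^j} \<le> card (factors X n)"
    by (rule card_inj_on_le[OF inj]) (auto simp: factors_win intro: factors_finite[OF X, unfolded factors_win])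
  then show ?thesis by (simp add: fcomplexity_def)
qed

lemma lower_tm: "10*3^j \<le> 2^j*(n+4) \<Longrightarrow> 3^j \<le> fcomplexity tm32 n"
proof (rule count_lower)
  show "\<And>k. tm32 k < 2" by (rule tm_lt)
  fix i i' assume "win tm32 i n = win tm32 i' n"
  then have a: "\<forall>u<n. tm32 (i+u) = tm32 (i'+u)" by (simp add: win_eq)
  show "agreeD i i' (n-1)" unfolding agreeD_def
  proof (intro allI impI)
    fix u assume "u < n-1"
    then have "u < n" "u+1 < n" by simp_all
    then have "tm32 (i+u) = tm32 (i'+u)" "tm32 (i+(u+1)) = tm32 (i'+(u+1))" using a by blast+
    then show "D (i+u) = D (i'+u)" by (simp add: D_eq add.assoc)
  qed
qed

lemma lower_D: "10*3^j \<le> 2^j*(n+4) \<Longrightarrow> 3^j \<le> fcomplexity D n"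
proof (rule count_lower)
  show "\<And>k. D k < 2" by (rule D_lt)
  fix i i' assume "win D i n = win D i' n"
  then show "agreeD i i' (n-1)" by (simp add: win_eq agreeD_def)
qed

definition F :: "nat \<Rightarrow> nat \<Rightarrow> nat list \<Rightarrow> nat list" where
  "F n s w = map (\<lambda>\<delta>. (w ! ((2*s+2*\<delta>) div 3) + (2*s+2*\<delta>) mod 3) mod 2) [0..<n]"

lemma win_F: "win tm32 i n = F n (i mod 3) (win tm32 (2*(i div 3)) ((2*n+5) div 3))"
  unfolding win_def F_def
proof (rule map_cong[OF refl])
  fix \<delta> assume "\<delta> \<in> set [0..<n]"
  then have d: "\<delta> < n" by simp
  define k where "k = i div 3"
  define s where "s = i mod 3"
  have i: "i = 3*k+s" and s: "s < 3" by (simp_all add: k_def s_def)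
  define v where "v = (2*s+2*\<delta>) div 3"
  have e: "2*(i+\<delta>) = (2*s+2*\<delta>) + 3*(2*k)" using i by simp
  have dv: "2*(i+\<delta>) div 3 = 2*k + v" unfolding e v_def by simp
  have md: "2*(i+\<delta>) mod 3 = (2*s+2*\<delta>) mod 3" unfolding e by (rule mod_mult_self2)
  have "v \<le> (2*n+2) div 3" unfolding v_def by (rule div_le_mono) (use s d in linarith)
  moreover have "(2*n+5) div 3 = (2*n+2) div 3 + 1" by simp
  ultimately have vm: "v < (2*n+5) div 3" by linarith
  have "map (\<lambda>j. tm32 (2*k+j)) [0..<(2*n+5) div 3] ! v = tm32 (2*k+v)" using vm by simp
  then show "tm32 (i+\<delta>) = (map (\<lambda>j. tm32 (2*(i div 3)+j)) [0..<(2*n+5) div 3] ! ((2*(i mod 3)+2*\<delta>) div 3)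
        + (2*(i mod 3)+2*\<delta>) mod 3) mod 2"
    using tm_rec[of "i+\<delta>"] dv md unfolding v_def k_def s_def by simp
qed

lemma upper_step: "fcomplexity tm32 n \<le> 3 * fcomplexity tm32 ((2*n+5) div 3)"
proof -
  define m where "m = (2*n+5) div 3"
  have "factors tm32 n \<subseteq> (\<lambda>(s,w). F n s w) ` ({..<3} \<times> factors tm32 m)"
  proof
    fix x assume "x \<in> factors tm32 n"
    then obtain i where x: "x = win tm32 i n" by (auto simp: factors_win)
    have "(i mod 3, win tm32 (2*(i div 3)) m) \<in> {..<3} \<times> factors tm32 m" by (auto simp: factors_win)
    then show "x \<in> (\<lambda>(s,w). F n s w) ` ({..<3} \<times> factors tm32 m)"
      using x win_F[of i n] unfolding m_def by force
  qed
  then have "card (factors tm32 n) \<le> card ((\<lambda>(s,w). F n s w) ` ({..<3} \<times> factors tm32 m))"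
    by (rule card_mono[rotated]) (auto intro: factors_finite tm_lt)
  also have "... \<le> card ({..<3::nat} \<times> factors tm32 m)" by (rule card_image_le) (auto intro: factors_finite tm_lt)
  also have "... = 3 * card (factors tm32 m)" by (simp add: card_cartesian_product)
  finally show ?thesis unfolding fcomplexity_def m_def .
qed

lemma upper_tm: "\<forall>n. 2^j*(n-5) \<le> 3^j \<longrightarrow> fcomplexity tm32 n \<le> 64*3^j"
proof (induction j)
  case 0
  show ?case
  proof (intro allI impI)
    fix n :: nat assume "2^0*(n-5) \<le> 3^0"
    then have "n \<le> 6" by simp
    have "fcomplexity tm32 n \<le> 2^n" by (rule factors_card2) (rule tm_lt)
    also have "... \<le> 2^6" using \<open>n \<le> 6\<close> by (rule power_increasing) simp
    finally show "fcomplexity tm32 n \<le> 64*3^0" by simp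
  qed
next
  case (Suc j)
  show ?case
  proof (intro allI impI)
    fix n :: nat assume h: "2^(Suc j)*(n-5) \<le> 3^(Suc j)"
    define m where "m = (2*n+5) div 3"
    have "3*m \<le> 2*n+5" unfolding m_def by simp
    then have m3: "3*(m-5) \<le> 2*(n-5)" by simp
    have "3*(2^j*(m-5)) \<le> 3*(3::nat)^j"
    proof -
      have "3*(2^j*(m-5)) = 2^j*(3*(m-5))" by simp
      also have "... \<le> 2^j*(2*(n-5))" using m3 by simp
      also have "... = 2^(Suc j)*(n-5)" by simp
      also have "... \<le> 3^(Suc j)" by (rule h)
      finally show ?thesis by simp
    qed
    then have "2^j*(m-5) \<le> 3^j" by simp
    then have "fcomplexity tm32 m \<le> 64*3^j" using Suc.IH by blast
    then show "fcomplexity tm32 n \<le> 64*3^(Suc j)"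
      using upper_step[of n] unfolding m_def by simp
  qed
qed



definition rr :: real where "rr = ln 3 / ln (3/2)"

lemma rr_pos: "rr > 0" unfolding rr_def by simp

lemma P1: "(3/2::real) powr rr = 3"
  unfolding rr_def powr_def by simp

lemma P2: "((3/2::real)^k) powr rr = 3^k"
proof -
  have "((3/2::real)^k) powr rr = ((3/2) powr real k) powr rr" by (simp add: powr_realpow)
  also have "... = ((3/2) powr rr) powr real k" by (simp add: powr_powr mult.commute)
  also have "... = 3^k" using P1 by (simp add: powr_realpow)
  finally show ?thesis .
qed

lemma pw: "(3/2::real)^k * 2^k = 3^k"
  by (simp add: power_mult_distrib[symmetric])

lemma lower_gen:
  assumes H: "\<And>j. 10*3^j \<le> 2^j*(n+4) \<Longrightarrow> 3^j \<le> P" and P1': "1 \<le> P" and n1: "n \<ge> 1"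
  shows "real n powr rr \<le> 3 * 10 powr rr * real P"
proof -
  define x where "x = real (n+4) / 10"
  have ex: "\<exists>J. x < (3/2::real)^J" by (rule real_arch_pow) simp
  define J where "J = (LEAST J. x < (3/2::real)^J)"
  have xJ: "x < (3/2)^J" unfolding J_def by (rule LeastI_ex[OF ex])
  have mn: "\<And>J'. J' < J \<Longrightarrow> \<not> x < (3/2)^J'" unfolding J_def by (rule not_less_Least)
  have le: "real n \<le> 10 * (3/2)^J" using xJ unfolding x_def by simp
  have "real n powr rr \<le> (10 * (3/2)^J) powr rr" by (rule powr_mono2[OF _ _ le]) (use rr_pos in auto)
  also have "... = 10 powr rr * 3^J" by (simp add: powr_mult P2)
  finally have A: "real n powr rr \<le> 10 powr rr * 3^J" .
  show ?thesis
  proof (cases J)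
    case 0
    then have "10 powr rr * (3::real)^J \<le> 3 * 10 powr rr * real P" using P1' by simp
    then show ?thesis using A by linarith
  next
    case (Suc J')
    then have "(3/2)^J' \<le> x" using mn[of J'] by simp
    then have "(3/2)^J' * 2^J' * 10 \<le> real (n+4) * 2^J'" unfolding x_def by (simp add: field_simps)
    then have "real (10*3^J') \<le> real (2^J'*(n+4))" unfolding pw by (simp add: algebra_simps)
    then have "3^J' \<le> P" using H of_nat_le_iff by blast
    then have "(3::real)^J' \<le> real P" by (metis of_nat_le_iff of_nat_numeral of_nat_power)
    then have "10 powr rr * (3::real)^J \<le> 3 * 10 powr rr * real P" using Suc by simp
    then show ?thesis using A by linarith
  qed
qed

lemma upper_gen:
  assumes n1: "n \<ge> 1"
  shows "real (fcomplexity tm32 n) \<le> 192 * real n powr rr"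
proof -
  have ex: "\<exists>J. real n < (3/2::real)^J" by (rule real_arch_pow) simp
  define J where "J = (LEAST J. real n < (3/2::real)^J)"
  have xJ: "real n < (3/2)^J" unfolding J_def by (rule LeastI_ex[OF ex])
  have mn: "\<And>J'. J' < J \<Longrightarrow> \<not> real n < (3/2)^J'" unfolding J_def by (rule not_less_Least)
  have "real n * 2^J \<le> (3/2)^J * 2^J" using xJ by simp
  then have "real (2^J * n) \<le> real (3^J)" unfolding pw by (simp add: algebra_simps)
  then have "2^J * n \<le> 3^J" by (simp only: of_nat_le_iff)
  then have "2^J * (n-5) \<le> 3^J" by (meson diff_le_self le_trans mult_le_mono2)
  then have "fcomplexity tm32 n \<le> 64*3^J" using upper_tm by blast
  then have B: "real (fcomplexity tm32 n) \<le> 64*3^J" by (metis of_nat_le_iff of_nat_numeral of_nat_power of_nat_mult)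
  have n1r: "1 \<le> real n powr rr" using n1 rr_pos by (simp add: ge_one_powr_ge_zero)
  have "(3::real)^J \<le> 3 * real n powr rr"
  proof (cases J)
    case 0 then show ?thesis using n1r by simp
  next
    case (Suc J')
    then have le: "(3/2)^J' \<le> real n" using mn[of J'] by simp
    have "((3/2)^J') powr rr \<le> real n powr rr" by (rule powr_mono2[OF _ _ le]) (use rr_pos in auto)
    then show ?thesis using Suc P2 by simp
  qed
  then show ?thesis using B by linarith
qed



lemma pos_card: "(\<And>k. (X::nat\<Rightarrow>nat) k < 2) \<Longrightarrow> 1 \<le> fcomplexity X n"
proof -
  assume a: "\<And>k. (X::nat\<Rightarrow>nat) k < 2"
  have "win X 0 n \<in> factors X n" by (simp add: factors_win)
  then have "factors X n \<noteq> {}" by blast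
  then show ?thesis unfolding fcomplexity_def using factors_finite[OF a]
    by (simp add: Suc_le_eq card_gt_0_iff)
qed

definition G :: "nat \<Rightarrow> nat list \<Rightarrow> nat list" where
  "G n xs = map (\<lambda>j. (xs ! Suc j + xs ! j) mod 2) [0..<n]"

lemma D_le: "fcomplexity D n \<le> fcomplexity tm32 (n+1)"
proof -
  have "factors D n \<subseteq> G n ` factors tm32 (n+1)"
  proof
    fix x assume "x \<in> factors D n"
    then obtain i where x: "x = win D i n" by (auto simp: factors_win)
    have "x = G n (win tm32 i (n+1))"
      unfolding x win_def G_def by (auto simp: Delta_def nth_append simp del: upt_Suc)
    then show "x \<in> G n ` factors tm32 (n+1)" by (auto simp: factors_win)
  qed
  then have "card (factors D n) \<le> card (G n ` factors tm32 (n+1))"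
    by (rule card_mono[rotated]) (auto intro: factors_finite tm_lt)
  also have "... \<le> card (factors tm32 (n+1))" by (rule card_image_le) (auto intro: factors_finite tm_lt)
  finally show ?thesis unfolding fcomplexity_def .
qed

theorem corollary16:
  fixes r :: real
  defines "r \<equiv> ln 3 / ln (3/2)"
  shows "(\<exists>C1 C2. C1 > 0 \<and> C2 > 0 \<and> (\<forall>n::nat. n \<ge> 1 \<longrightarrow>
            C1 * real n powr r \<le> real (fcomplexity tm32 n) \<and>
            real (fcomplexity tm32 n) \<le> C2 * real n powr r))
       \<and> (\<exists>C1 C2. C1 > 0 \<and> C2 > 0 \<and> (\<forall>n::nat. n \<ge> 1 \<longrightarrow>
            C1 * real n powr r \<le> real (fcomplexity (Delta tm32) n) \<and>
            real (fcomplexity (Delta tm32) n) \<le> C2 * real n powr r))"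
proof -
  have r: "r = rr" unfolding r_def rr_def by simp
  define K where "K = 3 * 10 powr rr"
  have K: "K > 0" unfolding K_def by simp
  have low: "\<And>X::nat\<Rightarrow>nat. (\<And>n j. 10*3^j \<le> 2^j*(n+4) \<Longrightarrow> 3^j \<le> fcomplexity X n) \<Longrightarrow>
      (\<And>k. X k < 2) \<Longrightarrow> \<forall>n\<ge>1. (1/K) * real n powr rr \<le> real (fcomplexity X n)"
  proof (intro allI impI)
    fix X :: "nat \<Rightarrow> nat" and n :: nat
    assume H: "\<And>n j. 10*3^j \<le> 2^j*(n+4) \<Longrightarrow> 3^j \<le> fcomplexity X n" and X: "\<And>k. X k < 2"
      and n: "n \<ge> 1"
    have "real n powr rr \<le> K * real (fcomplexity X n)"
      unfolding K_def by (rule lower_gen[OF H pos_card[OF X] n])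
    then show "(1/K) * real n powr rr \<le> real (fcomplexity X n)" using K
      by (simp add: field_simps)
  qed
  have lt: "\<forall>n\<ge>1. (1/K) * real n powr rr \<le> real (fcomplexity tm32 n)"
    by (rule low) (auto intro: lower_tm tm_lt)
  have lD: "\<forall>n\<ge>1. (1/K) * real n powr rr \<le> real (fcomplexity D n)"
    by (rule low) (auto intro: lower_D D_lt)
  have uD: "real (fcomplexity D n) \<le> (192 * 2 powr rr) * real n powr rr" if n: "n \<ge> 1" for n
  proof -
    have "real (fcomplexity D n) \<le> real (fcomplexity tm32 (n+1))" using D_le by simp
    also have "... \<le> 192 * real (n+1) powr rr" by (rule upper_gen) simp
    also have "real (n+1) powr rr \<le> (2 * real n) powr rr"
      by (rule powr_mono2) (use rr_pos n in auto)
    also have "(2 * real n) powr rr = 2 powr rr * real n powr rr" by (simp add: powr_mult)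
    finally show ?thesis by (simp add: algebra_simps)
  qed
  show ?thesis unfolding r
  proof (intro conjI)
    show "\<exists>C1 C2. C1 > 0 \<and> C2 > 0 \<and> (\<forall>n::nat. n \<ge> 1 \<longrightarrow>
            C1 * real n powr rr \<le> real (fcomplexity tm32 n) \<and>
            real (fcomplexity tm32 n) \<le> C2 * real n powr rr)"
      using lt upper_gen K by (intro exI[of _ "1/K"] exI[of _ 192]) auto
    show "\<exists>C1 C2. C1 > 0 \<and> C2 > 0 \<and> (\<forall>n::nat. n \<ge> 1 \<longrightarrow>
            C1 * real n powr rr \<le> real (fcomplexity (Delta tm32) n) \<and>
            real (fcomplexity (Delta tm32) n) \<le> C2 * real n powr rr)"
      using lD uD K by (intro exI[of _ "1/K"] exI[of _ "192 * 2 powr rr"]) auto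
  qed
qed

end
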